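(* Let $C_0$ be a binary linear $[n_0,n_0-r_0]_2 3$ code whose parity-check matrix $H_0=[h_1\cdots h_{n_0}]$ admits a $(3,0)$-partition $\mathcal P_0$ into $p_0$ subsets. Let $\mathcal V_{2m}$ be a binary linear $[n_{2m},n_{2m}-2m]_2 2$ code with parity-check matrix $\mathcal H_{2m}$ admitting a $2$-partition $\mathcal P_{2m}$ into $p_{2m}$ subsets. Let $m\ge2$ with $2^m-1\ge p_0$, choose an indicator assignment with all $\beta_j\in\mathbb{F}_{2^m}^*=\mathbb{F}_{2^m}\setminus\{0\}$, let $$D_4=\begin{bmatrix}0_{r_0}&0_{r_0}\\ W_m&0_m\\ 0_{2m}&\mathcal H_{2m}\end{bmatrix},\qquad H_C=[D_4\ A_3(h_1,\beta_1)\ \cdots\ A_3(h_{n_0},\beta_{n_0})].$$ Then $H_C$ is the parity-check matrix of a binary linear code $C$ of length $n=2^m(n_0+1)+n_{2m}-1$, codimension $r=r_0+3m$ and covering radius $3$. Moreover: $H_C$ admits a $(3,0)$-partition into at most $p_0+p_{2m}+1$ subsets and a $(3,1)$-partition into at most $p_0+p_{2m}+3$ subsets; if $H_0$ (resp. $\mathcal H_{2m}$) has three columns summing to zero lying in three distinct subsets of $\mathcal P_0$ (resp. $\mathcal P_{2m}$), then $H_C$ admits a $(3,1)$-partition into at most $p_0+p_{2m}+1$ subsets; and if every vector of $\mathbb{F}_2^{2m}$ is a sum of $2$ or $3$ columns of $\mathcal H_{2m}$, then the trivial partition of $H_C$ (into singletons) is a $(3,2)$-partition, i.e. $C$ is a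 $(3,2)$-object.
   Context: Covering radius of a binary linear code with $r\times n$ parity-check matrix $H$: smallest $R$ such that every vector of $\mathbb{F}_2^r$ is a sum of at most $R$ columns of $H$. $[n,n-r]_2R$: length $n$, codimension $r$, covering radius $R$. For $0\le\ell\le R$, an $(R,\ell)$-partition of $H$ is a partition of its columns into nonempty subsets such that every vector of $\mathbb{F}_2^r$ (including zero) is the sum of at least $\ell$ and at most $R$ columns lying in pairwise distinct subsets (zero = empty sum when $\ell=0$); a code is an $(R,\ell)$-object if a parity-check matrix admits an $(R,\ell)$-partition. A $2$-partition means a $(2,0)$-partition. Construction notation: identify $\mathbb{F}_2^m$ with $\mathbb{F}_{2^m}$ via a fixed basis. For $h\in\mathbb{F}_2^{r_0}$ and $\beta\in\mathbb{F}_{2^m}$, $A_3(h,\beta)$ is the $(r_0+3m)\times2^m$ matrix with columns $(h,\xi,\beta\xi,\beta^2\xi)^T$, $\xi\in\mathbb{F}_{2^m}$. $W_m$ is the $m\times(2^m-1)$ matrix of all nonzero vectors of $\mathbb{F}_2^m$; $0_v$ denotes a zero block with $v$ rows. An indicator assignment for $H_0,\mathcal P_0$ assigns $\beta_j$ to column $h_j$ with $\beta_i\ne\beta_j$ whenever $h_i,h_j$ lie in distinct subsets of $\mathcal P_0$. *)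

theory Defs
  imports Main "HOL-Library.Z2" "HOL-Library.Disjoint_Sets" "HOL-Library.Function_Algebras"
begin

text \<open>Binary vectors of F_2^r are functions nat => bit vanishing outside {0..<r}.
  A matrix is a finite index set I of columns together with a column map c.\<close>

definition vecs :: "nat \<Rightarrow> (nat \<Rightarrow> bit) set" where
  "vecs r = {v. \<forall>i\<ge>r. v i = 0}"

definition col_sum :: "('i \<Rightarrow> nat \<Rightarrow> bit) \<Rightarrow> 'i set \<Rightarrow> (nat \<Rightarrow> bit)" where
  "col_sum c S = (\<Sum>j\<in>S. c j)"

definition vcat :: "nat \<Rightarrow> (nat \<Rightarrow> bit) \<Rightarrow> (nat \<Rightarrow> bit) \<Rightarrow> (nat \<Rightarrow> bit)" where
  "vcat k u v = (\<lambda>i. if i < k then u i else v (i - k))"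

definition covers :: "'i set \<Rightarrow> ('i \<Rightarrow> nat \<Rightarrow> bit) \<Rightarrow> nat \<Rightarrow> nat \<Rightarrow> bool" where
  "covers I c r R \<longleftrightarrow> (\<forall>v\<in>vecs r. \<exists>S\<subseteq>I. card S \<le> R \<and> col_sum c S = v)"

definition covering_radius :: "'i set \<Rightarrow> ('i \<Rightarrow> nat \<Rightarrow> bit) \<Rightarrow> nat \<Rightarrow> nat \<Rightarrow> bool" where
  "covering_radius I c r R \<longleftrightarrow> covers I c r R \<and> (\<forall>R'<R. \<not> covers I c r R')"

text \<open>(I,c) is an r x n parity-check matrix of an [n,n-r]_2 R code.\<close>
definition code_params :: "'i set \<Rightarrow> ('i \<Rightarrow> nat \<Rightarrow> bit) \<Rightarrow> nat \<Rightarrow> nat \<Rightarrow> nat \<Rightarrow> bool" where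
  "code_params I c n r R \<longleftrightarrow> finite I \<and> card I = n \<and> (\<forall>j\<in>I. c j \<in> vecs r)
     \<and> covering_radius I c r R"

definition separated :: "'i set set \<Rightarrow> 'i set \<Rightarrow> bool" where
  "separated P S \<longleftrightarrow> (\<forall>x\<in>S. \<forall>y\<in>S. x \<noteq> y \<longrightarrow> \<not> (\<exists>B\<in>P. x \<in> B \<and> y \<in> B))"

definition RL_partition :: "'i set \<Rightarrow> ('i \<Rightarrow> nat \<Rightarrow> bit) \<Rightarrow> nat \<Rightarrow> nat \<Rightarrow> nat \<Rightarrow> 'i set set \<Rightarrow> bool" where
  "RL_partition I c r R l P \<longleftrightarrow> partition_on I P \<and>
     (\<forall>v\<in>vecs r. \<exists>S\<subseteq>I. l \<le> card S \<and> card S \<le> R \<and> separated P S \<and> col_sum c S = v)"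

definition indicator_assignment :: "'i set \<Rightarrow> 'i set set \<Rightarrow> ('i \<Rightarrow> 'f::zero) \<Rightarrow> bool" where
  "indicator_assignment I P \<beta> \<longleftrightarrow>
     (\<forall>i\<in>I. \<forall>j\<in>I. (\<not> (\<exists>B\<in>P. i \<in> B \<and> j \<in> B)) \<longrightarrow> \<beta> i \<noteq> \<beta> j)"

definition three_zero_sum :: "'i set \<Rightarrow> ('i \<Rightarrow> nat \<Rightarrow> bit) \<Rightarrow> 'i set set \<Rightarrow> bool" where
  "three_zero_sum I c P \<longleftrightarrow> (\<exists>S\<subseteq>I. card S = 3 \<and> separated P S \<and> col_sum c S = 0)"

text \<open>Columns of H_C.  Index set: nonzero w in F_2^m (columns of W_m),
  columns of H_2m, and pairs (j, xi) for the blocks A_3(h_j, beta_j).\<close>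
definition HC_index :: "nat \<Rightarrow> 'b set \<Rightarrow> 'a set \<Rightarrow> ((((nat \<Rightarrow> bit) + 'b) + ('a \<times> 'f)) set)" where
  "HC_index m J I0 = Inl ` (Inl ` (vecs m - {0}) \<union> Inr ` J) \<union> Inr ` (I0 \<times> UNIV)"

fun HC_col :: "nat \<Rightarrow> nat \<Rightarrow> ('f::field \<Rightarrow> nat \<Rightarrow> bit) \<Rightarrow> ('a \<Rightarrow> nat \<Rightarrow> bit) \<Rightarrow> ('b \<Rightarrow> nat \<Rightarrow> bit)
     \<Rightarrow> ('a \<Rightarrow> 'f) \<Rightarrow> (((nat \<Rightarrow> bit) + 'b) + ('a \<times> 'f)) \<Rightarrow> nat \<Rightarrow> bit" where
  "HC_col r0 m \<phi> h g \<beta> (Inl (Inl w)) = vcat r0 0 (vcat m w 0)"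
| "HC_col r0 m \<phi> h g \<beta> (Inl (Inr j)) = vcat r0 0 (vcat m 0 (g j))"
| "HC_col r0 m \<phi> h g \<beta> (Inr (j, \<xi>)) =
     vcat r0 (h j) (vcat m (\<phi> \<xi>) (vcat m (\<phi> (\<beta> j * \<xi>)) (\<phi> (\<beta> j ^ 2 * \<xi>))))"

end

theory Submission
  imports Defs
begin



declare add_bit_eq_xor[simp del] mult_bit_eq_and[simp del]

lemma bit_self [simp]: "(x::bit) + x = 0"
  by (cases x) simp_all

lemma fun_self [simp]: "(f::nat \<Rightarrow> bit) + f = 0"
  by (simp add: fun_eq_iff)

lemma sum_fun_apply: "(sum f S) i = (\<Sum>x\<in>S. f x i)"
  by (induction S rule: infinite_finite_induct) auto

lemma sum_vecs: "(\<And>x. x \<in> S \<Longrightarrow> f x \<in> vecs r) \<Longrightarrow> sum f S \<in> vecs r"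
  by (auto simp: vecs_def sum_fun_apply)

lemma zero_vecs [simp]: "0 \<in> vecs r"
  by (simp add: vecs_def)

lemma vcat_add: "vcat k u v + vcat k u' v' = vcat k (u + u') (v + v')"
  by (auto simp: vcat_def fun_eq_iff)

lemma vcat_zero [simp]: "vcat k 0 0 = 0"
  by (auto simp: vcat_def fun_eq_iff)

lemma vcat_sum: "(\<Sum>x\<in>S. vcat k (f x) (g x)) = vcat k (sum f S) (sum g S)"
  by (induction S rule: infinite_finite_induct) (auto simp: vcat_add vcat_def fun_eq_iff)

lemma vcat_vecs: "v \<in> vecs l \<Longrightarrow> k + l = n \<Longrightarrow> vcat k u v \<in> vecs n"
  by (auto simp: vecs_def vcat_def)

lemma vcat_split:
  assumes "w \<in> vecs (k + l)"
  shows "w = vcat k (\<lambda>i. if i < k then w i else 0) (\<lambda>i. w (i + k))"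
    "(\<lambda>i. if i < k then w i else 0) \<in> vecs k" "(\<lambda>i. w (i + k)) \<in> vecs l"
  using assms by (auto simp: vecs_def vcat_def fun_eq_iff)

lemma vcat_top_eq:
  assumes "vcat k u v = vcat k u' v'" "u \<in> vecs k" "u' \<in> vecs k"
  shows "u = u'"
proof
  fix i show "u i = u' i"
  proof (cases "i < k")
    case True then show ?thesis using fun_cong[OF assms(1), of i] by (simp add: vcat_def)
  next
    case False then show ?thesis using assms(2,3) by (simp add: vecs_def)
  qed
qed

lemma label_partition_on:
  "partition_on A ((\<lambda>k. {x\<in>A. lab x = k}) ` (lab ` A))"
  by (auto simp: partition_on_def disjoint_def)

lemma label_separated:
  "inj_on lab S \<Longrightarrow> separated ((\<lambda>k. {x\<in>A. lab x = k}) ` (lab ` A)) S"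
  by (auto simp: separated_def inj_on_def)

lemma label_card:
  "finite A \<Longrightarrow> card ((\<lambda>k. {x\<in>A. lab x = k}) ` (lab ` A)) \<le> card (lab ` A)"
  by (rule card_image_le) auto

lemma solve2:
  fixes b1 b2 b c :: "'f::field"
  assumes "b1 \<noteq> 0" "b2 \<noteq> 0" "b1 \<noteq> b2"
  shows "\<exists>x1 x2. b1 * x1 + b2 * x2 = b \<and> b1 ^ 2 * x1 + b2 ^ 2 * x2 = c"
proof -
  define D1 where "D1 = b1 * (b1 - b2)"
  define D2 where "D2 = b2 * (b2 - b1)"
  have d: "D1 \<noteq> 0" "D2 \<noteq> 0" using assms by (auto simp: D1_def D2_def)
  have e1: "b1 * ((c - b2 * b) / D1) + b2 * ((c - b1 * b) / D2) = b"
    using d by (simp add: field_simps) (simp add: D1_def D2_def algebra_simps)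
  have e2: "b1 ^ 2 * ((c - b2 * b) / D1) + b2 ^ 2 * ((c - b1 * b) / D2) = c"
    using d by (simp add: field_simps) (simp add: D1_def D2_def algebra_simps power2_eq_square)
  show ?thesis using e1 e2 by blast
qed

lemma solve3:
  fixes b1 b2 b3 a b c :: "'f::field"
  assumes "b1 \<noteq> b2" "b1 \<noteq> b3" "b2 \<noteq> b3"
  shows "\<exists>x1 x2 x3. x1 + x2 + x3 = a \<and> b1 * x1 + b2 * x2 + b3 * x3 = b
     \<and> b1 ^ 2 * x1 + b2 ^ 2 * x2 + b3 ^ 2 * x3 = c"
proof -
  define D1 where "D1 = (b1 - b2) * (b1 - b3)"
  define D2 where "D2 = (b2 - b1) * (b2 - b3)"
  define D3 where "D3 = (b3 - b1) * (b3 - b2)"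
  have d: "D1 \<noteq> 0" "D2 \<noteq> 0" "D3 \<noteq> 0" using assms by (auto simp: D1_def D2_def D3_def)
  define x1 where "x1 = (c - (b2 + b3) * b + b2 * b3 * a) / D1"
  define x2 where "x2 = (c - (b1 + b3) * b + b1 * b3 * a) / D2"
  define x3 where "x3 = (c - (b1 + b2) * b + b1 * b2 * a) / D3"
  have "x1 + x2 + x3 = a"
    using d unfolding x1_def x2_def x3_def by (simp add: field_simps) (simp add: D1_def D2_def D3_def algebra_simps)
  moreover have "b1 * x1 + b2 * x2 + b3 * x3 = b"
    using d unfolding x1_def x2_def x3_def by (simp add: field_simps) (simp add: D1_def D2_def D3_def algebra_simps)
  moreover have "b1 ^ 2 * x1 + b2 ^ 2 * x2 + b3 ^ 2 * x3 = c"
    using d unfolding x1_def x2_def x3_def by (simp add: field_simps) (simp add: D1_def D2_def D3_def algebra_simps power2_eq_square)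
  ultimately show ?thesis by blast
qed




definition blk :: "'x set set \<Rightarrow> 'x \<Rightarrow> 'x set" where
  "blk P j = (SOME B. B \<in> P \<and> j \<in> B)"

lemma blk_in:
  assumes "partition_on I P" "j \<in> I" shows "blk P j \<in> P" "j \<in> blk P j"
proof -
  have "\<exists>B. B \<in> P \<and> j \<in> B" using assms partition_onD1 by fastforce
  then have "blk P j \<in> P \<and> j \<in> blk P j" unfolding blk_def by (rule someI_ex)
  then show "blk P j \<in> P" "j \<in> blk P j" by auto
qed

lemma blk_eq:
  assumes "partition_on I P" "i \<in> I" "j \<in> I"
  shows "blk P i = blk P j \<longleftrightarrow> (\<exists>B\<in>P. i \<in> B \<and> j \<in> B)"
proof
  assume "blk P i = blk P j" then show "\<exists>B\<in>P. i \<in> B \<and> j \<in> B"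
    using blk_in[OF assms(1,2)] blk_in[OF assms(1,3)] by metis
next
  assume "\<exists>B\<in>P. i \<in> B \<and> j \<in> B"
  then obtain B where B: "B \<in> P" "i \<in> B" "j \<in> B" by blast
  have d: "disjoint P" using assms(1) partition_onD2 by blast
  have "blk P i = B" using d B blk_in[OF assms(1,2)] unfolding disjoint_def by blast
  moreover have "blk P j = B" using d B blk_in[OF assms(1,3)] unfolding disjoint_def by blast
  ultimately show "blk P i = blk P j" by simp
qed

lemma sep_inj:
  assumes "partition_on I P" "S \<subseteq> I" "separated P S" shows "inj_on (blk P) S"
proof (rule inj_onI)
  fix x y assume xy: "x \<in> S" "y \<in> S" "blk P x = blk P y"
  have "x \<in> I" "y \<in> I" using xy(1,2) assms(2) by auto
  then have "\<exists>B\<in>P. x \<in> B \<and> y \<in> B" using blk_eq[OF assms(1)] xy(3) by simp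
  then show "x = y" using assms(3) xy(1,2) unfolding separated_def by (metis (no_types))
qed

definition mk :: "('a \<times> 'f) set \<Rightarrow> (nat \<Rightarrow> bit) set \<Rightarrow> 'b set \<Rightarrow> (((nat \<Rightarrow> bit) + 'b) + ('a \<times> 'f)) set" where
  "mk T0 W S2 = Inr ` T0 \<union> Inl ` (Inl ` W \<union> Inr ` S2)"

fun lab :: "('a \<Rightarrow> 'a set) \<Rightarrow> ('b \<Rightarrow> 'b set) \<Rightarrow> ((nat \<Rightarrow> bit) \<Rightarrow> nat)
   \<Rightarrow> (((nat \<Rightarrow> bit) + 'b) + ('a \<times> 'f)) \<Rightarrow> ('a set + 'b set) + nat" where
  "lab B0 B2 k (Inl (Inl w)) = Inr (k w)"
| "lab B0 B2 k (Inl (Inr j)) = Inl (Inr (B2 j))"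
| "lab B0 B2 k (Inr (j, \<xi>)) = Inl (Inl (B0 j))"

definition lpart :: "'x set \<Rightarrow> ('x \<Rightarrow> 'l) \<Rightarrow> 'x set set" where
  "lpart A l = (\<lambda>k. {x\<in>A. l x = k}) ` (l ` A)"

lemma inj_lab:
  assumes "inj_on (B0 \<circ> fst) T0" "inj_on k W" "inj_on B2 S2"
  shows "inj_on (lab B0 B2 k) (mk T0 W S2)"
proof (rule inj_onI)
  have lr: "\<And>p. lab B0 B2 k (Inr p) = Inl (Inl (B0 (fst p)))" by (case_tac p) simp
  fix x y assume xy: "x \<in> mk T0 W S2" "y \<in> mk T0 W S2" "lab B0 B2 k x = lab B0 B2 k y"
  from xy(1) consider (a) p where "p \<in> T0" "x = Inr p" | (b) w where "w \<in> W" "x = Inl (Inl w)"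
    | (c) j where "j \<in> S2" "x = Inl (Inr j)" unfolding mk_def by blast
  then show "x = y"
  proof cases
    case a
    from xy(2) consider (a) q where "q \<in> T0" "y = Inr q" | (b) w where "w \<in> W" "y = Inl (Inl w)"
      | (c) j where "j \<in> S2" "y = Inl (Inr j)" unfolding mk_def by blast
    then show ?thesis
    proof cases
      case a': a
      then show ?thesis using a xy(3) inj_onD[OF assms(1)] by (simp add: lr)
    qed (use a xy(3) in \<open>simp_all add: lr\<close>)
  next
    case b
    from xy(2) consider (a) q where "q \<in> T0" "y = Inr q" | (b) w where "w \<in> W" "y = Inl (Inl w)"
      | (c) j where "j \<in> S2" "y = Inl (Inr j)" unfolding mk_def by blast
    then show ?thesis
    proof cases
      case b': b
      then show ?thesis using b xy(3) inj_onD[OF assms(2)] by simp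
    qed (use b xy(3) in \<open>simp_all add: lr\<close>)
  next
    case c
    from xy(2) consider (a) q where "q \<in> T0" "y = Inr q" | (b) w where "w \<in> W" "y = Inl (Inl w)"
      | (c) j where "j \<in> S2" "y = Inl (Inr j)" unfolding mk_def by blast
    then show ?thesis
    proof cases
      case c': c
      then show ?thesis using c xy(3) inj_onD[OF assms(3)] by simp
    qed (use c xy(3) in \<open>simp_all add: lr\<close>)
  qed
qed

lemma card_mk:
  fixes T0 :: "('a \<times> 'f) set" and W :: "(nat \<Rightarrow> bit) set" and S2 :: "'b set"
  assumes "finite T0" "finite W" "finite S2"
  shows "card (mk T0 W S2) = card T0 + card W + card S2"
proof -
  let ?A = "Inr ` T0 :: (((nat \<Rightarrow> bit) + 'b) + ('a \<times> 'f)) set"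
  let ?B = "Inl ` (Inl ` W \<union> Inr ` S2) :: (((nat \<Rightarrow> bit) + 'b) + ('a \<times> 'f)) set"
  let ?C = "Inl ` W :: ((nat \<Rightarrow> bit) + 'b) set"
  let ?D = "Inr ` S2 :: ((nat \<Rightarrow> bit) + 'b) set"
  have "card (mk T0 W S2) = card ?A + card ?B"
    unfolding mk_def by (intro card_Un_disjoint) (use assms in auto)
  also have "card ?B = card (?C \<union> ?D)"
    by (rule card_image) auto
  also have "\<dots> = card ?C + card ?D"
    by (intro card_Un_disjoint) (use assms in auto)
  also have "card ?A = card T0" by (rule card_image) auto
  also have "card ?C = card W" by (rule card_image) auto
  also have "card ?D = card S2" by (rule card_image) auto
  finally show ?thesis by simp
qed

lemma card_le1_inj: "finite W \<Longrightarrow> card W \<le> 1 \<Longrightarrow> inj_on k W"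
proof (rule inj_onI)
  fix x y assume "finite W" "card W \<le> 1" "x \<in> W" "y \<in> W"
  then show "x = y" using card_le_Suc0_iff_eq[of W] by simp
qed

locale T73 =
  fixes I0 :: "'a set" and h :: "'a \<Rightarrow> nat \<Rightarrow> bit" and P0 :: "'a set set"
    and J :: "'b set" and g :: "'b \<Rightarrow> nat \<Rightarrow> bit" and P2 :: "'b set set"
    and \<phi> :: "'f::{field,finite} \<Rightarrow> nat \<Rightarrow> bit" and \<beta> :: "'a \<Rightarrow> 'f"
    and n0 r0 p0 n2m p2m m :: nat
  assumes C0: "code_params I0 h n0 r0 3"
    and P0: "RL_partition I0 h r0 3 0 P0" "card P0 = p0"
    and V2m: "code_params J g n2m (2 * m) 2"
    and P2: "RL_partition J g (2 * m) 2 0 P2" "card P2 = p2m"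
    and m: "m \<ge> 2" "2 ^ m - 1 \<ge> p0"
    and field_card: "card (UNIV :: 'f set) = 2 ^ m"
    and basis: "bij_betw \<phi> UNIV (vecs m)" "\<And>x y. \<phi> (x + y) = \<phi> x + \<phi> y"
    and ind: "indicator_assignment I0 P0 \<beta>" "\<forall>j\<in>I0. \<beta> j \<noteq> 0"
begin

abbreviation "IC \<equiv> HC_index m J I0 :: ((((nat \<Rightarrow> bit) + 'b) + ('a \<times> 'f)) set)"
abbreviation "cC \<equiv> HC_col r0 m \<phi> h g \<beta>"

lemma phi0 [simp]: "\<phi> 0 = 0"
  using basis(2)[of 0 0] fun_self[of "\<phi> 0"] by simp

lemma phi_inj: "\<phi> x = \<phi> y \<longleftrightarrow> x = y"
  using basis(1) unfolding bij_betw_def inj_on_def by auto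

lemma phi_vecs [simp]: "\<phi> x \<in> vecs m"
  using basis(1) unfolding bij_betw_def by auto

lemma vecs_m: "vecs m = range \<phi>"
  using basis(1) unfolding bij_betw_def by auto

lemma finite_vecs [simp]: "finite (vecs m)"
  by (simp add: vecs_m)

lemma card_vecs: "card (vecs m) = 2 ^ m"
  using bij_betw_same_card[OF basis(1)] field_card by simp

lemma phi_sum: "\<phi> (sum f S) = (\<Sum>x\<in>S. \<phi> (f x))"
  by (induction S rule: infinite_finite_induct) (auto simp: basis(2))

lemma char2 [simp]: "(x::'f) + x = 0"
proof -
  have "\<phi> (x + x) = \<phi> 0" by (simp only: basis(2) fun_self phi0)
  then show ?thesis by (simp only: phi_inj)
qed

lemma minus_eq_plus: "(x::'f) - y = x + y"
proof -
  have "- y = y" using char2[of y] by (metis add_eq_0_iff)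
  then show ?thesis by (metis diff_conv_add_uminus)
qed

lemma card_ge4: "card (UNIV :: 'f set) \<ge> 4"
proof -
  have "(2::nat) ^ 2 \<le> 2 ^ m" using m(1) by (intro power_increasing) auto
  then show ?thesis using field_card by simp
qed

lemma avoid2: "\<exists>x::'f. x \<noteq> a \<and> x \<noteq> b"
proof (rule ccontr)
  assume "\<not> ?thesis"
  then have "UNIV \<subseteq> {a, b}" by auto
  then have "card (UNIV :: 'f set) \<le> card {a, b}" by (intro card_mono) auto
  also have "\<dots> \<le> 2" by (simp add: card_insert_le_m1)
  finally show False using card_ge4 by simp
qed

lemma finite_I0 [simp]: "finite I0" using C0 by (simp add: code_params_def)
lemma finite_J [simp]: "finite J" using V2m by (simp add: code_params_def)
lemma h_vecs: "j \<in> I0 \<Longrightarrow> h j \<in> vecs r0" using C0 by (simp add: code_params_def)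
lemma g_vecs: "j \<in> J \<Longrightarrow> g j \<in> vecs (2 * m)" using V2m by (simp add: code_params_def)
lemma partP0: "partition_on I0 P0" using P0 by (simp add: RL_partition_def)
lemma partP2: "partition_on J P2" using P2 by (simp add: RL_partition_def)

lemma finite_IC [simp]: "finite IC"
  unfolding HC_index_def by auto

lemma cC_Inr: "cC (Inr x) = vcat r0 (h (fst x)) (vcat m (\<phi> (snd x))
     (vcat m (\<phi> (\<beta> (fst x) * snd x)) (\<phi> (\<beta> (fst x) ^ 2 * snd x))))"
  by (cases x) simp

lemma colsum_mk:
  assumes "finite T0" "finite W" "finite S2"
  shows "col_sum cC (mk T0 W S2) = vcat r0 (\<Sum>x\<in>T0. h (fst x))
     (vcat m (\<phi> (\<Sum>x\<in>T0. snd x) + \<Sum>W)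
       (vcat m (\<phi> (\<Sum>x\<in>T0. \<beta> (fst x) * snd x)) (\<phi> (\<Sum>x\<in>T0. \<beta> (fst x) ^ 2 * snd x)) + sum g S2))"
proof -
  have "col_sum cC (mk T0 W S2) = sum cC (Inr ` T0) + sum cC (Inl ` (Inl ` W \<union> Inr ` S2))"
    unfolding col_sum_def mk_def using assms by (intro sum.union_disjoint) auto
  also have "sum cC (Inl ` (Inl ` W \<union> Inr ` S2)) = sum (cC \<circ> Inl) (Inl ` W \<union> Inr ` S2)"
    by (rule sum.reindex) auto
  also have "\<dots> = sum (cC \<circ> Inl) (Inl ` W) + sum (cC \<circ> Inl) (Inr ` S2)"
    using assms by (intro sum.union_disjoint) auto
  also have "sum (cC \<circ> Inl) (Inl ` W) = sum (cC \<circ> Inl \<circ> Inl) W"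
    by (rule sum.reindex) auto
  also have "sum (cC \<circ> Inl) (Inr ` S2) = sum (cC \<circ> Inl \<circ> Inr) S2"
    by (rule sum.reindex) auto
  also have "sum cC (Inr ` T0) = sum (cC \<circ> Inr) T0"
    by (rule sum.reindex) auto
  also have "sum (cC \<circ> Inr) T0 = vcat r0 (\<Sum>x\<in>T0. h (fst x))
     (vcat m (\<phi> (\<Sum>x\<in>T0. snd x))
       (vcat m (\<phi> (\<Sum>x\<in>T0. \<beta> (fst x) * snd x)) (\<phi> (\<Sum>x\<in>T0. \<beta> (fst x) ^ 2 * snd x))))"
    by (simp add: cC_Inr vcat_sum phi_sum)
  also have "sum (cC \<circ> Inl \<circ> Inl) W = vcat r0 0 (vcat m (\<Sum>W) 0)"
    by (simp add: vcat_sum)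
  also have "sum (cC \<circ> Inl \<circ> Inr) S2 = vcat r0 0 (vcat m 0 (sum g S2))"
    by (simp add: vcat_sum)
  finally show ?thesis by (simp add: vcat_add ac_simps zero_fun_def[symmetric])
qed

lemma mk_sub: "T0 \<subseteq> I0 \<times> UNIV \<Longrightarrow> W \<subseteq> vecs m - {0} \<Longrightarrow> S2 \<subseteq> J \<Longrightarrow> mk T0 W S2 \<subseteq> IC"
proof -
  assume a: "T0 \<subseteq> I0 \<times> UNIV" "W \<subseteq> vecs m - {0}" "S2 \<subseteq> J"
  have 1: "Inl ` (Inl ` W \<union> Inr ` S2) \<subseteq> Inl ` (Inl ` (vecs m - {0}) \<union> Inr ` J)"
    by (rule image_mono, rule Un_mono) (rule image_mono, rule a(2), rule image_mono, rule a(3))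
  have 2: "Inr ` T0 \<subseteq> Inr ` (I0 \<times> UNIV)" by (rule image_mono, rule a(1))
  have "mk T0 W S2 \<subseteq> Inr ` (I0 \<times> UNIV) \<union> Inl ` (Inl ` (vecs m - {0}) \<union> Inr ` J)"
    unfolding mk_def by (rule Un_mono[OF 2 1])
  then show ?thesis unfolding HC_index_def by (simp only: Un_commute)
qed

lemma decomp:
  assumes "v \<in> vecs (r0 + 3 * m)"
  shows "\<exists>u a b c. u \<in> vecs r0 \<and> v = vcat r0 u (vcat m (\<phi> a) (vcat m (\<phi> b) (\<phi> c)))"
proof -
  note s1 = vcat_split[OF assms]
  have "(\<lambda>i. v (i + r0)) \<in> vecs (m + (m + m))" using s1(3) by (simp add: numeral_3_eq_3 add.assoc)
  note s2 = vcat_split[OF this]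
  note s3 = vcat_split[OF s2(3)]
  obtain a where a: "(\<lambda>i. if i < m then v (i + r0) else 0) = \<phi> a" using s2(2) vecs_m by auto
  obtain b where b: "(\<lambda>i. if i < m then v (i + m + r0) else 0) = \<phi> b" using s3(2) vecs_m by auto
  obtain c where c: "(\<lambda>i. v (i + m + m + r0)) = \<phi> c" using s3(3) vecs_m by auto
  have e3: "(\<lambda>i. v (i + r0)) = vcat m (\<phi> a) (vcat m (\<phi> b) (\<phi> c))"
    using s2(1) s3(1) a b c by (simp add: add.assoc)
  have "v = vcat r0 (\<lambda>i. if i < r0 then v i else 0) (vcat m (\<phi> a) (vcat m (\<phi> b) (\<phi> c)))"
    using s1(1) unfolding e3 .
  then show ?thesis using s1(2) by blast
qed

end



context T73 begin

lemma phi_add_diff: "\<phi> x + \<phi> (y - x) = \<phi> y"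
  using basis(2)[of x "y - x"] by simp

lemma vv2: "vcat m (\<phi> x) (\<phi> y) \<in> vecs (2 * m)"
  by (rule vcat_vecs) auto

lemma rep2: "t \<in> vecs (2 * m) \<Longrightarrow> \<exists>S2. S2 \<subseteq> J \<and> finite S2 \<and> card S2 \<le> 2 \<and> inj_on (blk P2) S2 \<and> sum g S2 = t"
proof -
  assume "t \<in> vecs (2 * m)"
  then obtain S2 where "S2 \<subseteq> J" "card S2 \<le> 2" "separated P2 S2" "sum g S2 = t"
    using P2(1) unfolding RL_partition_def col_sum_def by blast
  moreover have "finite S2" using \<open>S2 \<subseteq> J\<close> finite_J finite_subset by blast
  ultimately show ?thesis using sep_inj[OF partP2] by blast
qed

lemma main_rep:
  assumes "v \<in> vecs (r0 + 3 * m)"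
  shows "\<exists>T0 W S2. finite T0 \<and> T0 \<subseteq> I0 \<times> UNIV \<and> inj_on (blk P0 \<circ> fst) T0 \<and> finite W
     \<and> W \<subseteq> vecs m - {0} \<and> card W \<le> 1 \<and> finite S2 \<and> S2 \<subseteq> J \<and> inj_on (blk P2) S2
     \<and> card T0 + card W + card S2 \<le> 3 \<and> col_sum cC (mk T0 W S2) = v"
proof -
  obtain u a b c where u: "u \<in> vecs r0" and v: "v = vcat r0 u (vcat m (\<phi> a) (vcat m (\<phi> b) (\<phi> c)))"
    using decomp[OF assms] by blast
  obtain S0 where S0: "S0 \<subseteq> I0" "card S0 \<le> 3" "separated P0 S0" "sum h S0 = u"
    using P0(1) u unfolding RL_partition_def col_sum_def by blast
  have fS0: "finite S0" using finite_subset[OF S0(1) finite_I0] .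
  have injS0: "inj_on (blk P0) S0" using sep_inj[OF partP0 S0(1) S0(3)] .
  have bdist: "\<beta> i \<noteq> \<beta> j" if "i \<in> S0" "j \<in> S0" "i \<noteq> j" for i j
  proof -
    have "blk P0 i \<noteq> blk P0 j" using injS0 that unfolding inj_on_def by blast
    then have "\<not> (\<exists>B\<in>P0. i \<in> B \<and> j \<in> B)" using blk_eq[OF partP0] that S0(1) by blast
    then show ?thesis using ind(1) that S0(1) unfolding indicator_assignment_def by blast
  qed
  have bnz: "\<beta> i \<noteq> 0" if "i \<in> S0" for i using ind(2) that S0(1) by blast
  consider "card S0 = 0" | "card S0 = 1" | "card S0 = 2" | "card S0 = 3" using S0(2) by linarith
  then show ?thesis
  proof cases
    case 1
    then have "S0 = {}" using fS0 by simp
    then have u0: "u = 0" using S0(4) by simp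
    obtain S2 where S2: "S2 \<subseteq> J" "finite S2" "card S2 \<le> 2" "inj_on (blk P2) S2" "sum g S2 = vcat m (\<phi> b) (\<phi> c)"
      using rep2[OF vv2] by blast
    define W where "W = (if a = 0 then {} else {\<phi> a})"
    have W: "finite W" "W \<subseteq> vecs m - {0}" "card W \<le> 1" "\<Sum>W = \<phi> a"
      unfolding W_def using phi_inj[of a 0] by auto
    have "col_sum cC (mk {} W S2) = v"
      unfolding colsum_mk[OF finite.emptyI W(1) S2(2)] by (simp add: v u0 W(4) S2(5) vcat_add zero_fun_def[symmetric])
    then show ?thesis using W S2 by (intro exI[of _ "{}"] exI[of _ W] exI[of _ S2]) auto
  next
    case 2
    then obtain j where j: "S0 = {j}" by (rule card_1_singletonE)
    have jI: "j \<in> I0" using j S0(1) by auto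
    have uj: "u = h j" using S0(4) j by simp
    obtain S2 where S2: "S2 \<subseteq> J" "finite S2" "card S2 \<le> 2" "inj_on (blk P2) S2"
      "sum g S2 = vcat m (\<phi> (b - \<beta> j * a)) (\<phi> (c - \<beta> j ^ 2 * a))"
      using rep2[OF vv2] by blast
    have "col_sum cC (mk {(j, a)} {} S2) = v"
      unfolding colsum_mk[OF finite.insertI[OF finite.emptyI] finite.emptyI S2(2)] by (simp add: v uj S2(5) vcat_add phi_add_diff)
    moreover have "card {(j, a)} + card ({}::(nat \<Rightarrow> bit) set) + card S2 \<le> 3" using S2(3) by simp
    ultimately show ?thesis using S2 jI by (intro exI[of _ "{(j, a)}"] exI[of _ "{}"] exI[of _ S2]) auto
  next
    case 3
    then obtain j1 j2 where j: "S0 = {j1, j2}" "j1 \<noteq> j2" by (auto simp: card_2_iff)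
    have jI: "j1 \<in> I0" "j2 \<in> I0" using j S0(1) by auto
    have uj: "u = h j1 + h j2" using S0(4) j by simp
    have bd: "\<beta> j1 \<noteq> \<beta> j2" "\<beta> j1 \<noteq> 0" "\<beta> j2 \<noteq> 0" using bdist bnz j by auto
    obtain x1 x2 where x: "\<beta> j1 * x1 + \<beta> j2 * x2 = b" "\<beta> j1 ^ 2 * x1 + \<beta> j2 ^ 2 * x2 = c"
      using solve2[OF bd(2,3,1)] by blast
    define w where "w = a - (x1 + x2)"
    define W where "W = (if w = 0 then {} else {\<phi> w})"
    have W: "finite W" "W \<subseteq> vecs m - {0}" "card W \<le> 1" "\<Sum>W = \<phi> w"
      unfolding W_def using phi_inj[of w 0] by auto
    have bl: "blk P0 j1 \<noteq> blk P0 j2" using injS0 j unfolding inj_on_def by auto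
    let ?T = "{(j1, x1), (j2, x2)}"
    have s1: "(\<Sum>x\<in>?T. h (fst x)) = u" using j(2) uj by simp
    have s2: "\<phi> (\<Sum>x\<in>?T. snd x) + \<Sum>W = \<phi> a" using j(2) W(4) w_def phi_add_diff by simp
    have s3: "(\<Sum>x\<in>?T. \<beta> (fst x) * snd x) = b" using j(2) x(1) by simp
    have s4: "(\<Sum>x\<in>?T. \<beta> (fst x) ^ 2 * snd x) = c" using j(2) x(2) by simp
    have "col_sum cC (mk ?T W {}) = v"
      unfolding colsum_mk[OF finite.insertI[OF finite.insertI[OF finite.emptyI]] W(1) finite.emptyI] s1 s2 s3 s4
      by (simp add: v)
    moreover have "card {(j1, x1), (j2, x2)} + card W + card ({}::'b set) \<le> 3" using W(3) j(2) by simp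
    ultimately show ?thesis using W jI bl
      by (intro exI[of _ "{(j1, x1), (j2, x2)}"] exI[of _ W] exI[of _ "{}"]) auto
  next
    case 4
    then obtain j1 j2 j3 where j: "S0 = {j1, j2, j3}" "j1 \<noteq> j2" "j2 \<noteq> j3" "j1 \<noteq> j3" by (auto simp: card_3_iff)
    have jI: "j1 \<in> I0" "j2 \<in> I0" "j3 \<in> I0" using j S0(1) by auto
    have uj: "u = h j1 + h j2 + h j3" using S0(4) j by (simp add: add.assoc)
    have bd: "\<beta> j1 \<noteq> \<beta> j2" "\<beta> j1 \<noteq> \<beta> j3" "\<beta> j2 \<noteq> \<beta> j3" using bdist j by auto
    obtain x1 x2 x3 where x: "x1 + x2 + x3 = a" "\<beta> j1 * x1 + \<beta> j2 * x2 + \<beta> j3 * x3 = b"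
      "\<beta> j1 ^ 2 * x1 + \<beta> j2 ^ 2 * x2 + \<beta> j3 ^ 2 * x3 = c"
      using solve3[OF bd] by blast
    have bl: "blk P0 j1 \<noteq> blk P0 j2" "blk P0 j2 \<noteq> blk P0 j3" "blk P0 j1 \<noteq> blk P0 j3"
      using injS0 j unfolding inj_on_def by auto
    let ?T = "{(j1, x1), (j2, x2), (j3, x3)}"
    have s1: "(\<Sum>x\<in>?T. h (fst x)) = u" using j(2-4) uj by (simp add: add.assoc)
    have s2: "\<phi> (\<Sum>x\<in>?T. snd x) + \<Sum>{} = \<phi> a" using j(2-4) x(1) by (simp add: add.assoc)
    have s3: "(\<Sum>x\<in>?T. \<beta> (fst x) * snd x) = b" using j(2-4) x(2) by (simp add: add.assoc)
    have s4: "(\<Sum>x\<in>?T. \<beta> (fst x) ^ 2 * snd x) = c" using j(2-4) x(3) by (simp add: add.assoc)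
    have "col_sum cC (mk ?T {} {}) = v"
      unfolding colsum_mk[OF finite.insertI[OF finite.insertI[OF finite.insertI[OF finite.emptyI]]] finite.emptyI finite.emptyI] s1 s2 s3 s4
      by (simp add: v)
    moreover have "card {(j1, x1), (j2, x2), (j3, x3)} + card ({}::(nat \<Rightarrow> bit) set) + card ({}::'b set) \<le> 3"
      using j(2-4) by simp
    moreover have "inj_on (blk P0 \<circ> fst) ?T" using bl j(2-4) by (auto simp: inj_on_def)
    moreover have "?T \<subseteq> I0 \<times> UNIV" using jI by simp
    ultimately show ?thesis
      by (intro exI[of _ "{(j1, x1), (j2, x2), (j3, x3)}"] exI[of _ "{}"] exI[of _ "{}"]) simp
  qed
qed

end



lemma covers_mono: "covers I c r R' \<Longrightarrow> R' \<le> R \<Longrightarrow> covers I c r R"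
  unfolding covers_def by (meson order_trans)

context T73 begin

lemma IC_mk: "IC = mk (I0 \<times> UNIV) (vecs m - {0}) J"
  unfolding mk_def HC_index_def by (simp only: Un_commute)

lemma card_IC: "card IC = 2 ^ m * (n0 + 1) + n2m - 1"
proof -
  have "card IC = card (I0 \<times> (UNIV :: 'f set)) + card (vecs m - {0}) + card J"
    unfolding IC_mk by (rule card_mk) auto
  also have "card (I0 \<times> (UNIV :: 'f set)) = n0 * 2 ^ m"
    using C0 field_card by (simp add: code_params_def card_cartesian_product)
  also have "card (vecs m - {0}) = 2 ^ m - 1" by (simp add: card_vecs)
  also have "card J = n2m" using V2m by (simp add: code_params_def)
  finally have e: "card IC = n0 * 2 ^ m + (2 ^ m - 1) + n2m" .
  have p: "1 \<le> (2::nat) ^ m" by simp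
  have "(2::nat) ^ m * (n0 + 1) = n0 * 2 ^ m + 2 ^ m" by (simp add: algebra_simps)
  then show ?thesis using e p by linarith
qed

lemma col_vecs: "x \<in> IC \<Longrightarrow> cC x \<in> vecs (r0 + 3 * m)"
proof -
  assume x: "x \<in> IC"
  then consider (a) w where "w \<in> vecs m - {0}" "x = Inl (Inl w)" | (b) j where "j \<in> J" "x = Inl (Inr j)"
    | (c) j \<xi> where "j \<in> I0" "x = Inr (j, \<xi>)" unfolding HC_index_def by auto
  then show ?thesis
  proof cases
    case a then show ?thesis by (auto intro!: vcat_vecs)
  next
    case b then show ?thesis using g_vecs[of j] by (auto intro!: vcat_vecs)
  next
    case c then show ?thesis by (auto intro!: vcat_vecs)
  qed
qed

lemma IC_cases:
  assumes "x \<in> IC"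
  obtains (a) w where "w \<in> vecs m - {0}" "x = Inl (Inl w)" | (b) j where "j \<in> J" "x = Inl (Inr j)"
    | (c) j \<xi> where "j \<in> I0" "x = Inr (j, \<xi>)"
  using assms unfolding HC_index_def by auto

lemma top_red:
  assumes "finite T0" "T0 \<subseteq> I0 \<times> UNIV" "card T0 \<le> 2"
  shows "\<exists>S0\<subseteq>I0. card S0 \<le> 2 \<and> sum h S0 = (\<Sum>x\<in>T0. h (fst x))"
proof -
  consider "card T0 = 0" | "card T0 = 1" | "card T0 = 2" using assms(3) by linarith
  then show ?thesis
  proof cases
    case 1 then have "T0 = {}" using assms(1) by simp
    then show ?thesis by (intro exI[of _ "{}"]) simp
  next
    case 2 then obtain p where p: "T0 = {p}" by (rule card_1_singletonE)
    then show ?thesis using assms(2) by (intro exI[of _ "{fst p}"]) auto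
  next
    case 3 then obtain p q where pq: "T0 = {p, q}" "p \<noteq> q" by (auto simp: card_2_iff)
    show ?thesis
    proof (cases "fst p = fst q")
      case True then show ?thesis using pq by (intro exI[of _ "{}"]) simp
    next
      case False then show ?thesis using pq assms(2) by (intro exI[of _ "{fst p, fst q}"]) auto
    qed
  qed
qed

lemma not_cover2: "\<not> covers IC cC (r0 + 3 * m) 2"
proof
  assume cov: "covers IC cC (r0 + 3 * m) 2"
  from C0 have "\<not> covers I0 h r0 2" unfolding code_params_def covering_radius_def by auto
  then obtain u0 where u0: "u0 \<in> vecs r0" "\<And>S. S \<subseteq> I0 \<Longrightarrow> card S \<le> 2 \<Longrightarrow> sum h S \<noteq> u0"
    unfolding covers_def col_sum_def by blast
  have "vcat r0 u0 0 \<in> vecs (r0 + 3 * m)" by (rule vcat_vecs) auto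
  then obtain S where S: "S \<subseteq> IC" "card S \<le> 2" "col_sum cC S = vcat r0 u0 0"
    using cov unfolding covers_def by blast
  define T0 where "T0 = {p. Inr p \<in> S}"
  define W where "W = {w. Inl (Inl w) \<in> S}"
  define S2 where "S2 = {j. Inl (Inr j) \<in> S}"
  have Seq: "S = mk T0 W S2"
  proof (rule set_eqI)
    fix x show "x \<in> S \<longleftrightarrow> x \<in> mk T0 W S2"
    proof (cases x)
      case (Inl y) then show ?thesis by (cases y) (auto simp: mk_def T0_def W_def S2_def)
    next
      case (Inr p) then show ?thesis by (auto simp: mk_def T0_def W_def S2_def)
    qed
  qed
  have T0s: "T0 \<subseteq> I0 \<times> UNIV" using S(1) unfolding T0_def HC_index_def by auto
  have Ws: "W \<subseteq> vecs m" using S(1) unfolding W_def HC_index_def by auto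
  have S2s: "S2 \<subseteq> J" using S(1) unfolding S2_def HC_index_def by auto
  have fT0: "finite T0" using T0s finite_subset by (metis finite_I0 finite_SigmaI finite)
  have fW: "finite W" using Ws finite_subset finite_vecs by blast
  have fS2: "finite S2" using S2s finite_subset finite_J by blast
  have "card S = card T0 + card W + card S2" unfolding Seq by (rule card_mk[OF fT0 fW fS2])
  then have cT0: "card T0 \<le> 2" using S(2) by linarith
  have eq: "col_sum cC S = vcat r0 (\<Sum>x\<in>T0. h (fst x)) (vcat m (\<phi> (\<Sum>x\<in>T0. snd x) + \<Sum>W)
       (vcat m (\<phi> (\<Sum>x\<in>T0. \<beta> (fst x) * snd x)) (\<phi> (\<Sum>x\<in>T0. \<beta> (fst x) ^ 2 * snd x)) + sum g S2))"
    unfolding Seq by (rule colsum_mk[OF fT0 fW fS2])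
  have "(\<Sum>x\<in>T0. h (fst x)) = u0"
    by (rule vcat_top_eq[OF trans[OF eq[symmetric] S(3)]]) (use u0(1) T0s h_vecs in \<open>auto intro!: sum_vecs\<close>)
  then show False using top_red[OF fT0 T0s cT0] u0(2) by metis
qed

lemma RL_lab:
  assumes rep: "\<And>v. v \<in> vecs (r0 + 3 * m) \<Longrightarrow> \<exists>T0 W S2. finite T0 \<and> T0 \<subseteq> I0 \<times> UNIV
     \<and> inj_on (blk P0 \<circ> fst) T0 \<and> finite W \<and> W \<subseteq> vecs m - {0} \<and> inj_on k W \<and> finite S2
     \<and> S2 \<subseteq> J \<and> inj_on (blk P2) S2 \<and> l \<le> card T0 + card W + card S2
     \<and> card T0 + card W + card S2 \<le> 3 \<and> col_sum cC (mk T0 W S2) = v"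
  shows "RL_partition IC cC (r0 + 3 * m) 3 l (lpart IC (lab (blk P0) (blk P2) k))"
  unfolding RL_partition_def
proof (intro conjI ballI)
  show "partition_on IC (lpart IC (lab (blk P0) (blk P2) k))"
    unfolding lpart_def by (rule label_partition_on)
  fix v assume "v \<in> vecs (r0 + 3 * m)"
  then obtain T0 W S2 where r: "finite T0" "T0 \<subseteq> I0 \<times> UNIV"
     "inj_on (blk P0 \<circ> fst) T0" "finite W" "W \<subseteq> vecs m - {0}" "inj_on k W" "finite S2"
     "S2 \<subseteq> J" "inj_on (blk P2) S2" "l \<le> card T0 + card W + card S2"
     "card T0 + card W + card S2 \<le> 3" "col_sum cC (mk T0 W S2) = v"
    using rep by blast
  have "mk T0 W S2 \<subseteq> IC" using mk_sub r by blast
  moreover have "card (mk T0 W S2) = card T0 + card W + card S2" using card_mk r by blast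
  moreover have "separated (lpart IC (lab (blk P0) (blk P2) k)) (mk T0 W S2)"
    unfolding lpart_def by (rule label_separated, rule inj_lab) (use r in auto)
  ultimately show "\<exists>S\<subseteq>IC. l \<le> card S \<and> card S \<le> 3 \<and> separated (lpart IC (lab (blk P0) (blk P2) k)) S
      \<and> col_sum cC S = v" using r by metis
qed

lemma card_lpart: "card (lpart IC (lab (blk P0) (blk P2) k)) \<le> p0 + p2m + card (k ` (vecs m - {0}))"
proof -
  let ?A = "Inl ` Inl ` P0 :: (('a set + 'b set) + nat) set"
  let ?B = "Inl ` Inr ` P2 :: (('a set + 'b set) + nat) set"
  let ?C = "Inr ` k ` (vecs m - {0}) :: (('a set + 'b set) + nat) set"
  have fP0: "finite P0" using finite_elements[OF finite_I0 partP0] .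
  have fP2: "finite P2" using finite_elements[OF finite_J partP2] .
  have sub: "lab (blk P0) (blk P2) k ` IC \<subseteq> ?A \<union> ?B \<union> ?C"
  proof
    fix y assume "y \<in> lab (blk P0) (blk P2) k ` IC"
    then obtain x where x: "x \<in> IC" "y = lab (blk P0) (blk P2) k x" by blast
    from x(1) show "y \<in> ?A \<union> ?B \<union> ?C"
    proof (cases rule: IC_cases)
      case (a w) then show ?thesis using x(2) by auto
    next
      case (b j) then show ?thesis using x(2) blk_in[OF partP2] by auto
    next
      case (c j \<xi>) then show ?thesis using x(2) blk_in[OF partP0] by auto
    qed
  qed
  have "card (lpart IC (lab (blk P0) (blk P2) k)) \<le> card (lab (blk P0) (blk P2) k ` IC)"
    unfolding lpart_def by (rule label_card) simp
  also have "\<dots> \<le> card (?A \<union> ?B \<union> ?C)" by (rule card_mono[OF _ sub]) (use fP0 fP2 in simp)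
  also have "\<dots> \<le> card (?A \<union> ?B) + card ?C" by (rule card_Un_le)
  also have "\<dots> \<le> card ?A + card ?B + card ?C" using card_Un_le[of ?A ?B] by linarith
  also have "card ?A \<le> p0" using P0(2) card_image_le[OF fP0, of "Inl \<circ> Inl"] by (simp add: image_comp)
  also have "card ?B \<le> p2m" using P2(2) card_image_le[OF fP2, of "Inl \<circ> Inr"] by (simp add: image_comp)
  also have "card ?C \<le> card (k ` (vecs m - {0}))" by (rule card_image_le) simp
  finally show ?thesis by simp
qed

end



lemma RL_covers: "RL_partition I c r R l P \<Longrightarrow> covers I c r R"
  unfolding RL_partition_def covers_def by blast

lemma sep_single: "separated ((\<lambda>x. {x}) ` A) S"
  unfolding separated_def by auto

context T73 begin

definition good :: "((nat \<Rightarrow> bit) \<Rightarrow> nat) \<Rightarrow> nat \<Rightarrow> (nat \<Rightarrow> bit) \<Rightarrow> bool" where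
  "good k l v \<longleftrightarrow> (\<exists>T0 W S2. finite T0 \<and> T0 \<subseteq> I0 \<times> UNIV
     \<and> inj_on (blk P0 \<circ> fst) T0 \<and> finite W \<and> W \<subseteq> vecs m - {0} \<and> inj_on k W \<and> finite S2
     \<and> S2 \<subseteq> J \<and> inj_on (blk P2) S2 \<and> l \<le> card T0 + card W + card S2
     \<and> card T0 + card W + card S2 \<le> 3 \<and> col_sum cC (mk T0 W S2) = v)"

lemma RL_good:
  assumes "\<And>v. v \<in> vecs (r0 + 3 * m) \<Longrightarrow> good k l v"
  shows "RL_partition IC cC (r0 + 3 * m) 3 l (lpart IC (lab (blk P0) (blk P2) k))"
  by (rule RL_lab) (use assms in \<open>unfold good_def\<close>)

lemma good_main: "v \<in> vecs (r0 + 3 * m) \<Longrightarrow> good k 0 v"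
  unfolding good_def using main_rep card_le1_inj by (metis le0)

lemma good_main1:
  assumes "v \<in> vecs (r0 + 3 * m)" "v \<noteq> 0" shows "good k 1 v"
proof -
  obtain T0 W S2 where r: "finite T0" "T0 \<subseteq> I0 \<times> UNIV" "inj_on (blk P0 \<circ> fst) T0" "finite W"
     "W \<subseteq> vecs m - {0}" "card W \<le> 1" "finite S2" "S2 \<subseteq> J" "inj_on (blk P2) S2"
     "card T0 + card W + card S2 \<le> 3" "col_sum cC (mk T0 W S2) = v"
    using main_rep[OF assms(1)] by blast
  have "1 \<le> card T0 + card W + card S2"
  proof (rule ccontr)
    assume "\<not> ?thesis"
    then have "card T0 = 0" "card W = 0" "card S2 = 0" by linarith+
    then have "T0 = {}" "W = {}" "S2 = {}" using r(1,4,7) by simp_all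
    then have "col_sum cC (mk T0 W S2) = 0" by (simp add: mk_def col_sum_def)
    then show False using r(11) assms(2) by simp
  qed
  then show ?thesis unfolding good_def using r card_le1_inj[OF r(4,6)] by blast
qed

lemma neg_id: "- (x::'f) = x"
  using char2[of x] by (metis add_eq_0_iff)

lemma add_eq0: "(x::'f) + y = 0 \<longleftrightarrow> x = y"
  by (metis add_eq_0_iff neg_id)

lemma zero_W: "\<exists>w1 w2. w1 \<in> vecs m - {0} \<and> w2 \<in> vecs m - {0} \<and> w1 \<noteq> w2 \<and> w1 + w2 \<in> vecs m - {0}
   \<and> w1 + w2 \<noteq> w1 \<and> w1 + w2 \<noteq> w2"
proof -
  obtain y1 :: 'f where y1: "y1 \<noteq> 0" using avoid2[of 0 0] by blast
  obtain y2 :: 'f where y2: "y2 \<noteq> 0" "y2 \<noteq> y1" using avoid2[of 0 y1] by blast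
  have "y1 + y2 \<noteq> 0" using y2(2) add_eq0 by metis
  moreover have "y1 + y2 \<noteq> y1" using y2(1) by simp
  moreover have "y1 + y2 \<noteq> y2" using y1 by simp
  ultimately show ?thesis using y1 y2
    by (intro exI[of _ "\<phi> y1"] exI[of _ "\<phi> y2"]) (auto simp: basis(2)[symmetric] phi_inj phi_inj[of _ 0, simplified])
qed

lemma good_zero3:
  obtains k where "good k 1 0" "card (k ` (vecs m - {0})) \<le> 3"
    "\<And>v. v \<in> vecs (r0 + 3 * m) \<Longrightarrow> v \<noteq> 0 \<Longrightarrow> good k 1 v"
proof -
  obtain w1 w2 where w: "w1 \<in> vecs m - {0}" "w2 \<in> vecs m - {0}" "w1 \<noteq> w2" "w1 + w2 \<in> vecs m - {0}"
     "w1 + w2 \<noteq> w1" "w1 + w2 \<noteq> w2" using zero_W by blast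
  define k where "k = (\<lambda>w. if w = w1 then 1 else if w = w2 then 2 else (0::nat))"
  let ?W = "{w1, w2, w1 + w2}"
  have ik: "inj_on k ?W" using w unfolding k_def inj_on_def by auto
  have cW: "card ?W = 3" using w by simp
  have sW: "\<Sum>?W = 0"
  proof -
    have "\<Sum>?W = w1 + (w2 + (w1 + w2))" using w by simp
    also have "\<dots> = (w1 + w2) + (w1 + w2)" by (simp only: add.assoc)
    finally show ?thesis by simp
  qed
  have "col_sum cC (mk {} ?W {}) = 0"
    unfolding colsum_mk[OF finite.emptyI _ finite.emptyI, of ?W, simplified] sW by simp
  then have "good k 1 0" unfolding good_def using w ik cW
    by (intro exI[of _ "{}"] exI[of _ ?W] exI[of _ "{}"]) auto
  moreover have "card (k ` (vecs m - {0})) \<le> 3"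
  proof -
    have "k ` (vecs m - {0}) \<subseteq> {0, 1, 2}" unfolding k_def by auto
    then have "card (k ` (vecs m - {0})) \<le> card {0::nat, 1, 2}" by (rule card_mono[rotated]) simp
    then show ?thesis by simp
  qed
  ultimately show ?thesis using that good_main1 by blast
qed

lemma good_zero_I0:
  assumes "three_zero_sum I0 h P0" shows "good k 1 0"
proof -
  obtain S where S: "S \<subseteq> I0" "card S = 3" "separated P0 S" "col_sum h S = 0"
    using assms unfolding three_zero_sum_def by blast
  have fS: "finite S" using finite_subset[OF S(1) finite_I0] .
  have injS: "inj_on (blk P0) S" using sep_inj[OF partP0 S(1) S(3)] .
  let ?f = "\<lambda>j. (j, 0::'f)"
  let ?T = "?f ` S"
  have inj: "inj_on ?f S" by (auto simp: inj_on_def)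
  have rs: "\<And>F. (\<Sum>x\<in>?T. F x) = (\<Sum>j\<in>S. F (j, 0))"
    using sum.reindex[OF inj] by (simp add: comp_def)
  have cT: "card ?T = 3" using card_image[OF inj] S(2) by simp
  have iT: "inj_on (blk P0 \<circ> fst) ?T" using injS by (auto simp: inj_on_def)
  have "col_sum cC (mk ?T {} {}) = 0"
    unfolding colsum_mk[OF finite_imageI[OF fS] finite.emptyI finite.emptyI] rs
    using S(4) by (simp add: col_sum_def)
  then show ?thesis unfolding good_def using cT iT S(1)
    by (intro exI[of _ ?T] exI[of _ "{}"] exI[of _ "{}"]) (auto simp: fS)
qed

lemma good_zero_J:
  assumes "three_zero_sum J g P2" shows "good k 1 0"
proof -
  obtain S where S: "S \<subseteq> J" "card S = 3" "separated P2 S" "col_sum g S = 0"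
    using assms unfolding three_zero_sum_def by blast
  have fS: "finite S" using finite_subset[OF S(1) finite_J] .
  have injS: "inj_on (blk P2) S" using sep_inj[OF partP2 S(1) S(3)] .
  have "col_sum cC (mk {} {} S) = 0"
    unfolding colsum_mk[OF finite.emptyI finite.emptyI fS]
    using S(4) by (simp add: col_sum_def)
  then show ?thesis unfolding good_def using S(1,2) injS fS
    by (intro exI[of _ "{}"] exI[of _ "{}"] exI[of _ S]) auto
qed

lemma card_const0: "card ((\<lambda>_. 0::nat) ` (vecs m - {0})) \<le> 1"
proof -
  have "(\<lambda>_. 0::nat) ` (vecs m - {0}) \<subseteq> {0}" by auto
  then show ?thesis using card_mono[of "{0::nat}"] by fastforce
qed

end



context T73 begin

lemma two_f [simp]: "(2::'f) = 0"
proof -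
  have "(1::'f) + 1 = 0" by (rule char2)
  then show ?thesis by (simp only: one_add_one)
qed

lemma char2' [simp]: "(x::'f) + (x + y) = y"
  by (simp add: add.assoc[symmetric])

lemma col22:
  assumes H: "\<forall>v\<in>vecs (2 * m). \<exists>S\<subseteq>J. (card S = 2 \<or> card S = 3) \<and> col_sum g S = v"
    and t: "t \<in> vecs (2 * m)"
  shows "\<exists>S\<subseteq>IC. 2 \<le> card S \<and> card S \<le> 3 \<and> col_sum cC S = vcat r0 0 (vcat m 0 t)"
proof -
  obtain S where S: "S \<subseteq> J" "card S = 2 \<or> card S = 3" "col_sum g S = t" using H t by blast
  have fS: "finite S" using finite_subset[OF S(1) finite_J] .
  have "col_sum cC (mk ({}::('a \<times> 'f) set) {} S) = vcat r0 0 (vcat m 0 t)"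
    unfolding colsum_mk[OF finite.emptyI finite.emptyI fS] using S(3) by (simp add: col_sum_def)
  moreover have "mk ({}::('a \<times> 'f) set) {} S \<subseteq> IC" using mk_sub S(1) by blast
  moreover have "card (mk ({}::('a \<times> 'f) set) {} S) = card S" using card_mk[OF finite.emptyI finite.emptyI fS] by simp
  ultimately show ?thesis using S(2) by (intro exI[of _ "mk ({}::('a \<times> 'f) set) {} S"]) auto
qed

lemma single_col:
  assumes H: "\<forall>v\<in>vecs (2 * m). \<exists>S\<subseteq>J. (card S = 2 \<or> card S = 3) \<and> col_sum g S = v"
    and x: "x \<in> IC"
  shows "\<exists>S\<subseteq>IC. 2 \<le> card S \<and> card S \<le> 3 \<and> col_sum cC S = cC x"
  using x
proof (cases rule: IC_cases)
  case (a w)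
  then obtain y where y: "w = \<phi> y" using vecs_m by auto
  have y0: "y \<noteq> 0" using a y by auto
  obtain y1 where y1: "y1 \<noteq> 0" "y1 \<noteq> y" using avoid2[of 0 y] by blast
  define y2 where "y2 = y + y1"
  have y20: "y2 \<noteq> 0" unfolding y2_def using add_eq0[of y y1] y1(2) by metis
  have y21: "y2 \<noteq> y1" unfolding y2_def using y0 by simp
  note y2 = y20 y21
  let ?W = "{\<phi> y1, \<phi> y2}"
  have "y1 + y2 = y + (y1 + y1)" unfolding y2_def by (rule add.left_commute)
  then have yy: "y1 + y2 = y" by simp
  have "\<Sum>?W = \<phi> y1 + \<phi> y2" using y21 by (simp add: phi_inj)
  also have "\<dots> = \<phi> (y1 + y2)" by (simp only: basis(2))
  finally have sW: "\<Sum>?W = w" unfolding yy y .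
  have W: "?W \<subseteq> vecs m - {0}" using y1(1) y2(1) phi_inj[of _ 0] by auto
  have cW: "card ?W = 2" using y2(2) by (simp add: phi_inj)
  have "col_sum cC (mk ({}::('a \<times> 'f) set) ?W ({}::'b set)) = cC x"
    unfolding colsum_mk[OF finite.emptyI _ finite.emptyI, of ?W, simplified] sW using a by simp
  moreover have "mk ({}::('a \<times> 'f) set) ?W ({}::'b set) \<subseteq> IC" using mk_sub W by blast
  moreover have "card (mk ({}::('a \<times> 'f) set) ?W ({}::'b set)) = 2" using card_mk[OF finite.emptyI _ finite.emptyI, of ?W] cW by (simp add: numeral_2_eq_2)
  ultimately show ?thesis by (intro exI[of _ "mk ({}::('a \<times> 'f) set) ?W ({}::'b set)"]) simp
next
  case (b j)
  then show ?thesis using col22[OF H g_vecs[OF b(1)]] by simp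
next
  case (c j \<xi>)
  obtain \<xi>1 where \<xi>1: "\<xi>1 \<noteq> \<xi>" using avoid2[of \<xi> \<xi>] by blast
  obtain \<xi>2 where \<xi>2: "\<xi>2 \<noteq> \<xi>" "\<xi>2 \<noteq> \<xi>1" using avoid2[of \<xi> \<xi>1] by blast
  define \<xi>3 where "\<xi>3 = \<xi> + (\<xi>1 + \<xi>2)"
  have d: "\<xi>3 \<noteq> \<xi>1" "\<xi>3 \<noteq> \<xi>2"
  proof -
    show "\<xi>3 \<noteq> \<xi>1"
    proof
      assume "\<xi>3 = \<xi>1"
      then have "\<xi>1 + \<xi>3 = 0" by simp
      moreover have "\<xi>1 + \<xi>3 = \<xi> + \<xi>2" unfolding \<xi>3_def by (simp add: add.left_commute)
      ultimately show False using \<xi>2(1) add_eq0 by metis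
    qed
    show "\<xi>3 \<noteq> \<xi>2"
    proof
      assume "\<xi>3 = \<xi>2"
      then have "\<xi>2 + \<xi>3 = 0" by simp
      moreover have "\<xi>2 + \<xi>3 = \<xi> + \<xi>1" unfolding \<xi>3_def by (simp add: add.left_commute add.commute)
      ultimately show False using \<xi>1 add_eq0 by metis
    qed
  qed
  have sx: "\<xi>1 + (\<xi>2 + \<xi>3) = \<xi>" unfolding \<xi>3_def by (simp add: add.left_commute)
  let ?T = "{(j, \<xi>1), (j, \<xi>2), (j, \<xi>3)}"
  have s1: "(\<Sum>x\<in>?T. h (fst x)) = h j" using \<xi>2(2) d by simp
  have s2: "(\<Sum>x\<in>?T. snd x) = \<xi>" using \<xi>2(2) d sx by simp
  have s3: "(\<Sum>x\<in>?T. \<beta> (fst x) * snd x) = \<beta> j * (\<xi>1 + (\<xi>2 + \<xi>3))" using \<xi>2(2) d by (simp add: distrib_left)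
  have s4: "(\<Sum>x\<in>?T. \<beta> (fst x) ^ 2 * snd x) = \<beta> j ^ 2 * (\<xi>1 + (\<xi>2 + \<xi>3))" using \<xi>2(2) d by (simp add: distrib_left)
  have "col_sum cC (mk ?T {} ({}::'b set)) = cC x"
    unfolding colsum_mk[OF finite.insertI[OF finite.insertI[OF finite.insertI[OF finite.emptyI]]] finite.emptyI finite.emptyI] s1 s2 s3 s4 sx
    using c by simp
  moreover have "mk ?T {} ({}::'b set) \<subseteq> IC" using mk_sub c(1) by auto
  moreover have "card (mk ?T {} ({}::'b set)) = 3"
    using card_mk[of ?T "{}" "{}::'b set"] \<xi>2(2) d by simp
  ultimately show ?thesis by (intro exI[of _ "mk ?T {} ({}::'b set)"]) simp
qed

lemma triv_RL:
  assumes H: "\<forall>v\<in>vecs (2 * m). \<exists>S\<subseteq>J. (card S = 2 \<or> card S = 3) \<and> col_sum g S = v"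
  shows "RL_partition IC cC (r0 + 3 * m) 3 2 ((\<lambda>x. {x}) ` IC)"
  unfolding RL_partition_def
proof (intro conjI ballI)
  show "partition_on IC ((\<lambda>x. {x}) ` IC)" by (rule partition_on_singletons)
  fix v assume v: "v \<in> vecs (r0 + 3 * m)"
  obtain T0 W S2 where r: "finite T0" "T0 \<subseteq> I0 \<times> UNIV" "finite W"
     "W \<subseteq> vecs m - {0}" "finite S2" "S2 \<subseteq> J"
     "card T0 + card W + card S2 \<le> 3" "col_sum cC (mk T0 W S2) = v"
    using main_rep[OF v] by blast
  let ?S = "mk T0 W S2"
  have sub: "?S \<subseteq> IC" using mk_sub r by blast
  have cS: "card ?S \<le> 3" using card_mk[OF r(1,3,5)] r(7) by simp
  have fS: "finite ?S" using finite_subset[OF sub finite_IC] .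
  have "\<exists>S\<subseteq>IC. 2 \<le> card S \<and> card S \<le> 3 \<and> col_sum cC S = v"
  proof (cases "2 \<le> card ?S")
    case True then show ?thesis using sub cS r(8) by blast
  next
    case False
    then consider "card ?S = 0" | "card ?S = 1" by linarith
    then show ?thesis
    proof cases
      case 1
      then have "?S = {}" using fS by simp
      then have "v = 0" using r(8) by (simp add: col_sum_def)
      then show ?thesis using col22[OF H zero_vecs] by simp
    next
      case 2
      then obtain x where x: "?S = {x}" by (rule card_1_singletonE)
      then have "v = cC x" using r(8) by (simp add: col_sum_def)
      moreover have "x \<in> IC" using x sub by auto
      ultimately show ?thesis using single_col[OF H] by blast
    qed
  qed
  then show "\<exists>S\<subseteq>IC. 2 \<le> card S \<and> card S \<le> 3 \<and> separated ((\<lambda>x. {x}) ` IC) S \<and> col_sum cC S = v"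
    using sep_single by blast
qed

end

theorem theorem7p3:
  fixes I0 :: "'a set" and h :: "'a \<Rightarrow> nat \<Rightarrow> bit" and P0 :: "'a set set"
    and J :: "'b set" and g :: "'b \<Rightarrow> nat \<Rightarrow> bit" and P2 :: "'b set set"
    and \<phi> :: "'f::{field,finite} \<Rightarrow> nat \<Rightarrow> bit" and \<beta> :: "'a \<Rightarrow> 'f"
    and n0 r0 p0 n2m p2m m :: nat
  assumes C0: "code_params I0 h n0 r0 3"
    and P0: "RL_partition I0 h r0 3 0 P0" "card P0 = p0"
    and V2m: "code_params J g n2m (2 * m) 2"
    and P2: "RL_partition J g (2 * m) 2 0 P2" "card P2 = p2m"
    and m: "m \<ge> 2" "2 ^ m - 1 \<ge> p0"
    and field_card: "card (UNIV :: 'f set) = 2 ^ m"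
    and basis: "bij_betw \<phi> UNIV (vecs m)" "\<And>x y. \<phi> (x + y) = \<phi> x + \<phi> y"
    and ind: "indicator_assignment I0 P0 \<beta>" "\<forall>j\<in>I0. \<beta> j \<noteq> 0"
  defines "IC \<equiv> HC_index m J I0 :: ((((nat \<Rightarrow> bit) + 'b) + ('a \<times> 'f)) set)"
    and "cC \<equiv> HC_col r0 m \<phi> h g \<beta>"
  shows "code_params IC cC (2 ^ m * (n0 + 1) + n2m - 1) (r0 + 3 * m) 3
    \<and> (\<exists>P. RL_partition IC cC (r0 + 3 * m) 3 0 P \<and> card P \<le> p0 + p2m + 1)
    \<and> (\<exists>P. RL_partition IC cC (r0 + 3 * m) 3 1 P \<and> card P \<le> p0 + p2m + 3)
    \<and> (three_zero_sum I0 h P0 \<or> three_zero_sum J g P2 \<longrightarrow>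
           (\<exists>P. RL_partition IC cC (r0 + 3 * m) 3 1 P \<and> card P \<le> p0 + p2m + 1))
    \<and> ((\<forall>v\<in>vecs (2 * m). \<exists>S\<subseteq>J. (card S = 2 \<or> card S = 3) \<and> col_sum g S = v) \<longrightarrow>
           RL_partition IC cC (r0 + 3 * m) 3 2 ((\<lambda>x. {x}) ` IC))"
proof -
  interpret T: T73 I0 h P0 J g P2 \<phi> \<beta> n0 r0 p0 n2m p2m m
    by (rule T73.intro) (rule C0 P0 V2m P2 m field_card basis ind)+
  let ?k0 = "\<lambda>_::nat \<Rightarrow> bit. 0::nat"
  have A0: "RL_partition IC cC (r0 + 3 * m) 3 0 (lpart IC (lab (blk P0) (blk P2) ?k0))"
    unfolding IC_def cC_def by (rule T.RL_good) (rule T.good_main)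
  have cA0: "card (lpart IC (lab (blk P0) (blk P2) ?k0)) \<le> p0 + p2m + 1"
    unfolding IC_def using T.card_lpart[of ?k0] T.card_const0 by linarith
  have c1: "code_params IC cC (2 ^ m * (n0 + 1) + n2m - 1) (r0 + 3 * m) 3"
    unfolding code_params_def covering_radius_def
  proof (intro conjI allI impI ballI)
    show "finite IC" unfolding IC_def by simp
    show "card IC = 2 ^ m * (n0 + 1) + n2m - 1" unfolding IC_def by (rule T.card_IC)
    show "cC j \<in> vecs (r0 + 3 * m)" if "j \<in> IC" for j
      using that unfolding IC_def cC_def by (rule T.col_vecs)
    show "covers IC cC (r0 + 3 * m) 3" using RL_covers[OF A0] .
    show "\<not> covers IC cC (r0 + 3 * m) R'" if "R' < 3" for R'
      using covers_mono[of IC cC "r0 + 3 * m" R' 2] that T.not_cover2 unfolding IC_def cC_def by auto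
  qed
  have c3: "\<exists>P. RL_partition IC cC (r0 + 3 * m) 3 1 P \<and> card P \<le> p0 + p2m + 3"
  proof -
    obtain k where k: "T.good k 1 0" "card (k ` (vecs m - {0})) \<le> 3"
      "\<And>v. v \<in> vecs (r0 + 3 * m) \<Longrightarrow> v \<noteq> 0 \<Longrightarrow> T.good k 1 v" by (rule T.good_zero3) blast
    have "RL_partition IC cC (r0 + 3 * m) 3 1 (lpart IC (lab (blk P0) (blk P2) k))"
      unfolding IC_def cC_def by (rule T.RL_good) (use k in metis)
    moreover have "card (lpart IC (lab (blk P0) (blk P2) k)) \<le> p0 + p2m + 3"
      unfolding IC_def using T.card_lpart[of k] k(2) by linarith
    ultimately show ?thesis by blast
  qed
  have c4: "three_zero_sum I0 h P0 \<or> three_zero_sum J g P2 \<longrightarrow>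
           (\<exists>P. RL_partition IC cC (r0 + 3 * m) 3 1 P \<and> card P \<le> p0 + p2m + 1)"
  proof
    assume tz: "three_zero_sum I0 h P0 \<or> three_zero_sum J g P2"
    have z: "T.good ?k0 1 0" using tz T.good_zero_I0 T.good_zero_J by blast
    have "RL_partition IC cC (r0 + 3 * m) 3 1 (lpart IC (lab (blk P0) (blk P2) ?k0))"
      unfolding IC_def cC_def by (rule T.RL_good) (use z T.good_main1 in metis)
    then show "\<exists>P. RL_partition IC cC (r0 + 3 * m) 3 1 P \<and> card P \<le> p0 + p2m + 1"
      using cA0 by blast
  qed
  have c5: "(\<forall>v\<in>vecs (2 * m). \<exists>S\<subseteq>J. (card S = 2 \<or> card S = 3) \<and> col_sum g S = v) \<longrightarrow>
           RL_partition IC cC (r0 + 3 * m) 3 2 ((\<lambda>x. {x}) ` IC)"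
    unfolding IC_def cC_def using T.triv_RL by blast
  show ?thesis using c1 A0 cA0 c3 c4 c5 by blast
qed



end
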